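(* Let $d,\lambda_0,N_0\in\mathbb N$ and $\epsilon\in\left(0,\frac{1}{\lambda_0+1}\right)$ be given. There exists $c=c(\epsilon)>0$ such that the following holds for every positive integer $k\geq c\log d$: there is a scaling factor $\lambda_1=\lambda_1(\lambda_0,\epsilon,k,N_0)\in\mathbb N$ such that for every integer $\lambda\geq\lambda_1$ and for every point set $\mathcal{D}\subset\frac{\lambda}{\lambda_0}\mathbb Z^d\cap B_{\lambda N_0}$ with $|\mathcal{D}|=d$, there is a mapping $F:\mathcal{D}\to\frac{1}{\lambda_0}\mathbb Z^k$ such that for all $x,y\in\mathcal{D}$, \[ \left(1-\epsilon-\frac{\epsilon}{\lambda\lambda_0}\right)\|x-y\|\leq\|F(x)-F(y)\|\leq\left(1+\epsilon+\frac{\epsilon}{\lambda\lambda_0}\right)\|x-y\|. \]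
   Context: $\|\cdot\|$ denotes the Euclidean norm. $B_r$ denotes the closed Euclidean ball of radius $r$ centered at the origin in $\mathbb R^d$. For $s>0$ and $m\in\mathbb N$, $s\mathbb Z^m=\{s z: z\in\mathbb Z^m\}$. *)

theory Defs
  imports "HOL-Analysis.Analysis"
begin

text \<open>Vectors of R^m are represented as functions nat => real that vanish
outside the coordinates 0..m-1 (the dimension m varies inside the statement).\<close>

definition vec_space :: "nat \<Rightarrow> (nat \<Rightarrow> real) set" where
  "vec_space m = {x. \<forall>i\<ge>m. x i = 0}"

definition vnorm :: "nat \<Rightarrow> (nat \<Rightarrow> real) \<Rightarrow> real" where
  "vnorm m x = sqrt (\<Sum>i<m. (x i)\<^sup>2)"

definition scaled_lattice :: "real \<Rightarrow> nat \<Rightarrow> (nat \<Rightarrow> real) set" where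
  "scaled_lattice s m = {x \<in> vec_space m. \<forall>i<m. \<exists>z::int. x i = s * of_int z}"

definition cball0 :: "nat \<Rightarrow> real \<Rightarrow> (nat \<Rightarrow> real) set" where
  "cball0 m r = {x \<in> vec_space m. vnorm m x \<le> r}"

end

theory Submission
  imports Defs
begin


lemma two_pow_fact_le: "2^m * fact m \<le> (fact (2*m) :: real)"
proof (induction m)
  case 0 then show ?case by simp
next
  case (Suc m)
  have "(2::real)^Suc m * fact (Suc m) = (2 * of_nat (m+1)) * (2^m * fact m)"
    by (simp add: algebra_simps)
  also have "\<dots> \<le> (of_nat (2*m+2) * of_nat (2*m+1)) * fact (2*m)"
    by (rule mult_mono) (use Suc in auto)
  also have "\<dots> = fact (2 * Suc m)"
    by (simp add: fact_Suc algebra_simps)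
  finally show ?case .
qed

lemma exp_sums_real: "(\<lambda>n. (x::real)^n / fact n) sums exp x"
proof -
  have "(\<lambda>n. x^n /\<^sub>R fact n) = (\<lambda>n. (x::real)^n / fact n)"
    by (rule ext) (simp add: divide_inverse_commute)
  then show ?thesis using exp_converges[of x] by simp
qed

lemma cosh_bound: "cosh (x::real) \<le> exp (x^2/2)"
proof -
  have 1: "(\<lambda>n. if even n then x^n /\<^sub>R fact n else 0) sums cosh x" by (rule cosh_converges)
  have e: "(\<lambda>m. (x^2/2)^m / fact m) sums exp(x^2/2)"
    by (rule exp_sums_real)
  have 2: "(\<lambda>n. if even n then (\<lambda>m. (x^2/2)^m / fact m) (n div 2) else (\<lambda>_. 0::real) ((n - 1) div 2)) sums (0 + exp(x^2/2))"
    by (rule sums_if[OF sums_zero e])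
  have 3: "(\<lambda>n. if even n then (x^2/2)^(n div 2) / fact (n div 2) else 0) sums exp(x^2/2)"
    using 2 by simp
  show ?thesis
  proof (rule sums_le[OF _ 1 3])
    fix n
    show "(if even n then x^n /\<^sub>R fact n else 0) \<le> (if even n then (x^2/2)^(n div 2) / fact (n div 2) else 0)"
    proof (cases "even n")
      case True
      then obtain m where n: "n = 2*m" by blast
      have a: "x^n /\<^sub>R fact n = (x^2)^m / fact (2*m)"
        unfolding n by (simp add: power_mult divide_inverse_commute)
      have b: "(x^2)^m / fact (2*m) \<le> (x^2)^m / (2^m * fact m)"
        by (intro divide_left_mono two_pow_fact_le) auto
      have c: "(x^2)^m / (2^m * fact m) = (x^2/2)^(n div 2) / fact (n div 2)"
        unfolding n by (simp add: power_divide)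
      show ?thesis using True a b c by simp
    qed simp
  qed
qed

lemma exp_pm_bound: "exp (x::real) + exp (-x) \<le> 2 * exp (x^2/2)"
  using cosh_bound[of x] by (simp add: cosh_def)

lemma term_le_exp: assumes "(y::real) \<ge> 0" shows "y^n / fact n \<le> exp y"
proof -
  have s: "summable (\<lambda>n. y^n /\<^sub>R fact n)" using exp_converges sums_summable by blast
  have "(\<Sum>i\<in>{n}. y^i /\<^sub>R fact i) \<le> (\<Sum>i. y^i /\<^sub>R fact i)"
    by (rule sum_le_suminf[OF s]) (use assms in auto)
  then show ?thesis using exp_converges[of y] by (simp add: sums_iff divide_inverse mult.commute)
qed

lemma exp_neg_bound: assumes "(x::real) \<ge> 0" shows "exp (-x) \<le> 1 - x + x^2/2"
proof -
  let ?f = "\<lambda>x::real. 1 - x + x^2/2 - exp (-x)"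
  have d: "(?f has_real_derivative (-1 + y + exp (-y))) (at y)" for y
    by (auto intro!: derivative_eq_intros simp: power2_eq_square)
  have "?f 0 \<le> ?f x"
  proof (rule DERIV_nonneg_imp_nondecreasing[OF assms])
    fix y :: real assume "0 \<le> y" "y \<le> x"
    have "0 \<le> -1 + y + exp (-y)" using exp_ge_add_one_self[of "-y"] by linarith
    then show "\<exists>d. (?f has_real_derivative d) (at y) \<and> 0 \<le> d"
      using d[of y] by blast
  qed
  then show ?thesis by simp
qed



definition signs :: "nat \<Rightarrow> (nat \<Rightarrow> real) set" where
  "signs d = PiE {..<d} (\<lambda>_. {-1, 1})"

definition rz :: "nat \<Rightarrow> (nat \<Rightarrow> real) \<Rightarrow> (nat \<Rightarrow> real) \<Rightarrow> real" where
  "rz d r u = (\<Sum>i<d. r i * u i)"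

lemma finite_signs: "finite (signs d)"
  unfolding signs_def by (intro finite_PiE) auto

lemma card_signs: "card (signs d) = 2^d"
  unfolding signs_def by (simp add: card_PiE numeral_2_eq_2)

lemma signs_val: "r \<in> signs d \<Longrightarrow> i < d \<Longrightarrow> r i = -1 \<or> r i = 1"
  unfolding signs_def by (auto simp: PiE_def Pi_def)

lemma mgf_row: "(\<Sum>r\<in>signs d. exp (l * rz d r u)) \<le> 2^d * exp (l^2 * (\<Sum>i<d. (u i)^2) / 2)"
proof -
  have "(\<Sum>r\<in>signs d. exp (l * rz d r u)) = (\<Sum>r\<in>signs d. \<Prod>i<d. exp (l * r i * u i))"
    unfolding rz_def by (simp add: sum_distrib_left exp_sum mult.assoc)
  also have "\<dots> = (\<Prod>i<d. \<Sum>s\<in>{-1,1}. exp (l * s * u i))"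
    unfolding signs_def by (rule prod_sum_PiE[symmetric]) auto
  also have "\<dots> = (\<Prod>i<d. exp (l * u i) + exp (- (l * u i)))"
    by (simp add: add.commute)
  also have "\<dots> \<le> (\<Prod>i<d. 2 * exp ((l * u i)^2 / 2))"
    by (intro prod_mono) (use exp_pm_bound in auto)
  also have "\<dots> = 2^d * exp (l^2 * (\<Sum>i<d. (u i)^2) / 2)"
    by (simp add: prod.distrib exp_sum[symmetric] sum_divide_distrib sum_distrib_left power_mult_distrib)
  finally show ?thesis .
qed

lemma signs_sq: "r \<in> signs d \<Longrightarrow> i < d \<Longrightarrow> r i * r i = 1"
  by (drule signs_val) auto

lemma sum_signs_prod2:
  assumes "i < d" "j < d" "i \<noteq> j"
  shows "(\<Sum>r\<in>signs d. r i * r j) = 0"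
proof -
  define f where "f = (\<lambda>l (s::real). (if l = i then s else 1) * (if l = j then s else 1))"
  have "(\<Sum>r\<in>signs d. r i * r j) = (\<Sum>r\<in>signs d. \<Prod>l<d. f l (r l))"
  proof (rule sum.cong[OF refl])
    fix r assume "r \<in> signs d"
    have "(\<Prod>l<d. f l (r l)) = (\<Prod>l<d. (if l = i then r l else 1)) * (\<Prod>l<d. (if l = j then r l else 1))"
      unfolding f_def by (rule prod.distrib)
    also have "\<dots> = r i * r j" using assms by (simp add: prod.delta)
    finally show "r i * r j = (\<Prod>l<d. f l (r l))" by simp
  qed
  also have "\<dots> = (\<Prod>l<d. \<Sum>s\<in>{-1,1}. f l s)"
    unfolding signs_def by (rule prod_sum_PiE[symmetric]) auto
  also have "\<dots> = 0"
  proof (rule prod_zero)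
    have "(\<Sum>s\<in>{-1,1}. f i s) = 0" using assms by (simp add: f_def)
    then show "\<exists>a\<in>{..<d}. (\<Sum>s\<in>{-1,1}. f a s) = 0" using assms by blast
  qed simp
  finally show ?thesis .
qed

lemma second_row: "(\<Sum>r\<in>signs d. (rz d r u)^2) = 2^d * (\<Sum>i<d. (u i)^2)"
proof -
  have "(\<Sum>r\<in>signs d. (rz d r u)^2) = (\<Sum>r\<in>signs d. \<Sum>i<d. \<Sum>j<d. (r i * r j) * (u i * u j))"
    unfolding rz_def power2_eq_square sum_product by (simp add: algebra_simps)
  also have "\<dots> = (\<Sum>i<d. \<Sum>r\<in>signs d. \<Sum>j<d. (r i * r j) * (u i * u j))"
    by (rule sum.swap)
  also have "\<dots> = (\<Sum>i<d. \<Sum>j<d. \<Sum>r\<in>signs d. (r i * r j) * (u i * u j))"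
    by (intro sum.cong refl sum.swap)
  also have "\<dots> = (\<Sum>i<d. \<Sum>j<d. (\<Sum>r\<in>signs d. r i * r j) * (u i * u j))"
    by (simp only: sum_distrib_right)
  also have "\<dots> = (\<Sum>i<d. \<Sum>j<d. (if i = j then 2^d else 0) * (u i * u j))"
  proof (intro sum.cong refl)
    fix i j assume ij: "i \<in> {..<d}" "j \<in> {..<d}"
    show "(\<Sum>r\<in>signs d. r i * r j) * (u i * u j) = (if i = j then 2^d else 0) * (u i * u j)"
    proof (cases "i = j")
      case True
      have "(\<Sum>r\<in>signs d. r i * r j) = (\<Sum>r\<in>signs d. 1)"
        using True signs_sq[of _ d i] ij by (intro sum.cong) auto
      then show ?thesis using True by (simp add: card_signs)
    qed (use sum_signs_prod2 ij in auto)
  qed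
  also have "\<dots> = 2^d * (\<Sum>i<d. (u i)^2)"
  proof -
    have "(\<Sum>i<d. \<Sum>j<d. (if i = j then (2::real)^d else 0) * (u i * u j)) = (\<Sum>i<d. 2^d * (u i * u i))"
    proof (rule sum.cong[OF refl])
      fix i assume "i \<in> {..<d}"
      have "(\<Sum>j<d. (if i = j then (2::real)^d else 0) * (u i * u j)) = (\<Sum>j<d. if i = j then 2^d * (u i * u j) else 0)"
        by (rule sum.cong) auto
      also have "\<dots> = 2^d * (u i * u i)" using \<open>i \<in> {..<d}\<close> by (simp add: sum.delta)
      finally show "(\<Sum>j<d. (if i = j then (2::real)^d else 0) * (u i * u j)) = 2^d * (u i * u i)" .
    qed
    then show ?thesis by (simp add: sum_distrib_left power2_eq_square)
  qed
  finally show ?thesis .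
qed



lemma fact_exp_bound: "fact (2*m) * exp (real m) \<le> 6^m * fact m * (2 * real m)^m"
proof -
  have n: "(fact (2*m)::nat) = fact m * fact m * ((2*m) choose m)"
    using binomial_fact_lemma[of m "2*m"] by simp
  have "fact (2*m) = fact m * fact m * real ((2*m) choose m)"
    by (metis n of_nat_fact of_nat_mult)
  also have "\<dots> \<le> fact m * real (m^m) * 4^m"
  proof -
    have "real ((2*m) choose m) \<le> 4^m"
      using binomial_le_pow2[of "2*m" m] by (simp add: power_mult flip: of_nat_le_iff)
    moreover have "(fact m :: real) \<le> real (m^m)" by (rule fact_le_power)
    ultimately show ?thesis
      by (intro mult_mono) auto
  qed
  finally have f: "fact (2*m) \<le> fact m * real m ^ m * 4^m" by simp
  have e: "exp (real m) \<le> 3^m"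
    using exp_of_nat_mult[of m "1::real"] power_mono[OF exp_le, of m] by simp
  have "fact (2*m) * exp (real m) \<le> (fact m * real m ^ m * 4^m) * 3^m"
    by (intro mult_mono f e) auto
  also have "\<dots> = 6^m * fact m * (2 * real m)^m"
  proof -
    have h: "(4::real)^m * 3^m = 6^m * 2^m" by (simp flip: power_mult_distrib)
    have "(fact m * real m ^ m * 4^m) * 3^m = fact m * real m ^ m * ((4::real)^m * 3^m)"
      by (simp only: mult.assoc)
    also have "\<dots> = fact m * real m ^ m * (6^m * 2^m)" by (simp only: h)
    also have "\<dots> = 6^m * fact m * (2^m * real m ^ m)" by (simp only: mult_ac)
    also have "\<dots> = 6^m * fact m * (2 * real m)^m" by (simp only: power_mult_distrib)
    finally show ?thesis .
  qed
  finally show ?thesis .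
qed

lemma moment_row:
  assumes u1: "(\<Sum>i<d. (u i)^2) = 1" and m: "m \<ge> 1"
  shows "(\<Sum>r\<in>signs d. (rz d r u)^(2*m)) \<le> 2^d * 2 * 6^m * fact m"
proof -
  define l where "l = sqrt (2 * real m)"
  have l0: "l > 0" using m by (simp add: l_def)
  have l2: "l^2 = 2 * real m" by (simp add: l_def)
  define C where "C = fact (2*m) / (2 * real m)^m"
  have pm: "(2 * real m)^m > 0" using m by simp
  have pt: "z^(2*m) \<le> C * (exp (l*z) + exp ((-l)*z))" for z :: real
  proof -
    have "(l*\<bar>z\<bar>)^(2*m) / fact (2*m) \<le> exp (l*\<bar>z\<bar>)" by (rule term_le_exp) (use l0 in auto)
    also have "exp (l*\<bar>z\<bar>) \<le> exp (l*z) + exp ((-l)*z)" by (cases "z \<ge> 0") auto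
    finally have 1: "(l*\<bar>z\<bar>)^(2*m) \<le> fact (2*m) * (exp (l*z) + exp ((-l)*z))"
      by (simp add: divide_le_eq mult.commute)
    have "(l*\<bar>z\<bar>)^(2*m) = ((l*\<bar>z\<bar>)^2)^m" by (simp add: power_mult)
    also have "\<dots> = (l^2)^m * (z^2)^m" by (simp add: power_mult_distrib)
    also have "\<dots> = (2 * real m)^m * z^(2*m)" by (simp add: l2 power_mult)
    finally have 2: "(l*\<bar>z\<bar>)^(2*m) = (2 * real m)^m * z^(2*m)" .
    from 1 2 pm show ?thesis unfolding C_def by (simp add: field_simps)
  qed
  have "(\<Sum>r\<in>signs d. (rz d r u)^(2*m)) \<le> (\<Sum>r\<in>signs d. C * (exp (l * rz d r u) + exp ((-l) * rz d r u)))"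
    by (intro sum_mono pt)
  also have "\<dots> = C * ((\<Sum>r\<in>signs d. exp (l * rz d r u)) + (\<Sum>r\<in>signs d. exp ((-l) * rz d r u)))"
    by (simp add: sum.distrib sum_distrib_left distrib_left)
  also have "\<dots> \<le> C * (2^d * exp (real m) + 2^d * exp (real m))"
  proof -
    have C0: "C \<ge> 0" unfolding C_def using pm by simp
    have "(\<Sum>r\<in>signs d. exp (l * rz d r u)) \<le> 2^d * exp (real m)"
      using mgf_row[of l d u] by (simp add: u1 l2)
    moreover have "(\<Sum>r\<in>signs d. exp ((-l) * rz d r u)) \<le> 2^d * exp (real m)"
      using mgf_row[of "-l" d u] by (simp add: u1 l2)
    ultimately have "(\<Sum>r\<in>signs d. exp (l * rz d r u)) + (\<Sum>r\<in>signs d. exp ((-l) * rz d r u)) \<le> 2^d * exp (real m) + 2^d * exp (real m)"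
      by (rule add_mono)
    then show ?thesis using C0 by (rule mult_left_mono)
  qed
  also have "\<dots> = 2^d * 2 * (fact (2*m) * exp (real m)) / (2 * real m)^m"
    by (simp add: C_def field_simps)
  also have "\<dots> \<le> 2^d * 2 * (6^m * fact m * (2 * real m)^m) / (2 * real m)^m"
    by (intro divide_right_mono mult_left_mono fact_exp_bound) (use pm in auto)
  also have "\<dots> = 2^d * 2 * 6^m * fact m" using pm m by simp
  finally show ?thesis .
qed



lemma mgf_sq_upper:
  assumes u1: "(\<Sum>i<d. (u i)^2) = 1" and t0: "0 \<le> t" and t1: "t \<le> 1/12"
  shows "(\<Sum>r\<in>signs d. exp (t * (rz d r u)^2)) \<le> 2^d * (1 + t + 144 * t^2)"
proof -
  define f where "f = (\<lambda>n. \<Sum>r\<in>signs d. (t * (rz d r u)^2)^n / fact n)"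
  have fs: "f sums (\<Sum>r\<in>signs d. exp (t * (rz d r u)^2))"
    unfolding f_def by (rule sums_sum) (rule exp_sums_real)
  have f_eq: "f n = t^n * (\<Sum>r\<in>signs d. (rz d r u)^(2*n)) / fact n" for n
    unfolding f_def by (simp add: sum_divide_distrib sum_distrib_left power_mult_distrib power_mult)
  have f0: "f 0 = 2^d" by (simp add: f_eq card_signs)
  have f1: "f 1 = 2^d * t" using second_row[of d u] by (simp add: f_eq u1)
  define q where "q = 6 * t"
  have q0: "0 \<le> q" and q1: "q \<le> 1/2" using t0 t1 by (auto simp: q_def)
  have fb: "f (n+2) \<le> 2^d * 2 * q^(n+2)" for n
  proof -
    have "f (n+2) = t^(n+2) * (\<Sum>r\<in>signs d. (rz d r u)^(2*(n+2))) / fact (n+2)" by (rule f_eq)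
    also have "\<dots> \<le> t^(n+2) * (2^d * 2 * 6^(n+2) * fact (n+2)) / fact (n+2)"
      by (intro divide_right_mono mult_left_mono moment_row u1) (use t0 in auto)
    also have "\<dots> = 2^d * 2 * q^(n+2)" by (simp add: q_def power_mult_distrib)
    finally show ?thesis .
  qed
  have geo: "(\<lambda>n. 2^d * 2 * q^(n+2)) sums (2^d * 2 * q^2 / (1 - q))"
  proof -
    have "(\<lambda>n. q^n) sums (1 / (1 - q))" using q0 q1 by (intro geometric_sums) auto
    from sums_mult[OF this, of "2^d * 2 * q^2"]
    have "(\<lambda>n. 2^d * 2 * q^2 * q^n) sums (2^d * 2 * q^2 * (1 / (1 - q)))" .
    moreover have "(\<lambda>n. 2^d * 2 * q^2 * q^n) = (\<lambda>n. 2^d * 2 * q^(n+2))"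
      by (rule ext) (simp add: power_add power2_eq_square)
    ultimately show ?thesis by simp
  qed
  have s2: "(\<lambda>n. f (n+2)) sums (\<Sum>n. f (n+2))"
  proof -
    have "summable f" using fs sums_summable by blast
    then have "summable (\<lambda>n. f (n+2))" by (rule summable_ignore_initial_segment)
    then show ?thesis by (rule summable_sums)
  qed
  have "(\<Sum>n. f (n+2)) \<le> 2^d * 2 * q^2 / (1 - q)"
    by (rule sums_le[OF fb s2 geo])
  also have "\<dots> \<le> 2^d * 2 * q^2 * 2"
  proof -
    have "1 / (1 - q) \<le> 2" using q1 by (simp add: field_simps)
    then have "(2^d * 2 * q^2) * (1 / (1 - q)) \<le> (2^d * 2 * q^2) * 2"
      by (rule mult_left_mono) (use q0 in auto)
    then show ?thesis by simp
  qed
  finally have tail: "(\<Sum>n. f (n+2)) \<le> 2^d * 144 * t^2" by (simp add: q_def power2_eq_square)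
  have "(\<Sum>r\<in>signs d. exp (t * (rz d r u)^2)) = suminf f" using fs by (simp add: sums_iff)
  also have "\<dots> = (\<Sum>n. f (n+2)) + sum f {..<2}"
    by (rule suminf_split_initial_segment) (use fs sums_summable in blast)
  also have "sum f {..<2} = 2^d + 2^d * t" using f0 f1 by (simp add: numeral_2_eq_2)
  finally show ?thesis using tail by (simp add: algebra_simps)
qed

lemma mgf_sq_lower:
  assumes u1: "(\<Sum>i<d. (u i)^2) = 1" and t0: "0 \<le> t"
  shows "(\<Sum>r\<in>signs d. exp (- (t * (rz d r u)^2))) \<le> 2^d * (1 - t + 72 * t^2)"
proof -
  have "(\<Sum>r\<in>signs d. exp (- (t * (rz d r u)^2))) \<le>
        (\<Sum>r\<in>signs d. 1 - t * (rz d r u)^2 + t^2 / 2 * (rz d r u)^(2*2))"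
  proof (rule sum_mono)
    fix r
    have "exp (- (t * (rz d r u)^2)) \<le> 1 - t * (rz d r u)^2 + (t * (rz d r u)^2)^2 / 2"
      by (rule exp_neg_bound) (use t0 in auto)
    also have "(t * (rz d r u)^2)^2 / 2 = t^2 / 2 * (rz d r u)^(2*2)"
      by (simp add: power_mult_distrib power_mult)
    finally show "exp (- (t * (rz d r u)^2)) \<le> 1 - t * (rz d r u)^2 + t^2 / 2 * (rz d r u)^(2*2)" .
  qed
  also have "\<dots> = 2^d - t * 2^d + t^2 / 2 * (\<Sum>r\<in>signs d. (rz d r u)^(2*2))"
    using second_row[of d u] u1
    by (simp add: sum.distrib sum_subtractf sum_distrib_left[symmetric] sum_divide_distrib[symmetric] card_signs)
  also have "\<dots> \<le> 2^d - t * 2^d + t^2 / 2 * (2^d * 2 * 6^2 * fact 2)"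
    by (intro add_left_mono mult_left_mono moment_row u1) auto
  also have "\<dots> = 2^d * (1 - t + 72 * t^2)" by (simp add: algebra_simps)
  finally show ?thesis .
qed



definition mats :: "nat \<Rightarrow> nat \<Rightarrow> (nat \<Rightarrow> nat \<Rightarrow> real) set" where
  "mats k d = PiE {..<k} (\<lambda>_. signs d)"

definition qf :: "nat \<Rightarrow> nat \<Rightarrow> (nat \<Rightarrow> nat \<Rightarrow> real) \<Rightarrow> (nat \<Rightarrow> real) \<Rightarrow> real" where
  "qf k d A u = (\<Sum>j<k. (rz d (A j) u)^2)"

lemma finite_mats: "finite (mats k d)"
  unfolding mats_def by (intro finite_PiE finite_signs) auto

lemma card_mats: "card (mats k d) = (2^d)^k"
  unfolding mats_def by (simp add: card_PiE card_signs)

lemma sum_mats_exp: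
  "(\<Sum>A\<in>mats k d. exp (s * qf k d A u)) = (\<Sum>r\<in>signs d. exp (s * (rz d r u)^2))^k"
proof -
  have "(\<Sum>A\<in>mats k d. exp (s * qf k d A u)) = (\<Sum>A\<in>mats k d. \<Prod>j<k. exp (s * (rz d (A j) u)^2))"
    unfolding qf_def by (simp add: sum_distrib_left exp_sum)
  also have "\<dots> = (\<Prod>j<k. \<Sum>r\<in>signs d. exp (s * (rz d r u)^2))"
    unfolding mats_def by (rule prod_sum_PiE[symmetric]) (auto simp: finite_signs)
  also have "\<dots> = (\<Sum>r\<in>signs d. exp (s * (rz d r u)^2))^k" by simp
  finally show ?thesis .
qed

lemma markov_count:
  assumes "finite S" "\<And>x. x \<in> S \<Longrightarrow> 0 \<le> f x" "0 < a"
  shows "real (card {x\<in>S. a \<le> f x}) * a \<le> (\<Sum>x\<in>S. f x)"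
proof -
  have "real (card {x\<in>S. a \<le> f x}) * a = (\<Sum>x\<in>{x\<in>S. a \<le> f x}. a)" by simp
  also have "\<dots> \<le> (\<Sum>x\<in>{x\<in>S. a \<le> f x}. f x)" by (rule sum_mono) auto
  also have "\<dots> \<le> (\<Sum>x\<in>S. f x)" by (rule sum_mono2) (use assms in auto)
  finally show ?thesis .
qed

lemma tail_upper:
  assumes u1: "(\<Sum>i<d. (u i)^2) = 1" and d0: "0 < \<delta>" and d1: "\<delta> \<le> 1/4"
  shows "real (card {A\<in>mats k d. (1+\<delta>) * k \<le> qf k d A u}) \<le> real (card (mats k d)) * exp (- (k * \<delta>^2 / 576))"
proof -
  define t where "t = \<delta> / 288"
  have t0: "0 \<le> t" and t1: "t \<le> 1/12" using d0 d1 by (auto simp: t_def)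
  define a where "a = exp (t * ((1+\<delta>) * k))"
  have a0: "0 < a" by (simp add: a_def)
  have sub: "{A\<in>mats k d. (1+\<delta>) * k \<le> qf k d A u} \<subseteq> {A\<in>mats k d. a \<le> exp (t * qf k d A u)}"
    unfolding a_def using t0 by (auto intro: mult_left_mono)
  have "real (card {A\<in>mats k d. (1+\<delta>) * k \<le> qf k d A u}) * a \<le> real (card {A\<in>mats k d. a \<le> exp (t * qf k d A u)}) * a"
    using card_mono[OF _ sub] finite_mats a0 by (intro mult_right_mono) auto
  also have "\<dots> \<le> (\<Sum>A\<in>mats k d. exp (t * qf k d A u))"
    by (rule markov_count[OF finite_mats _ a0]) auto
  also have "\<dots> = (\<Sum>r\<in>signs d. exp (t * (rz d r u)^2))^k" by (rule sum_mats_exp)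
  also have "\<dots> \<le> (2^d * (1 + t + 144 * t^2))^k"
    by (intro power_mono mgf_sq_upper u1 t0 t1) (auto intro: sum_nonneg)
  also have "\<dots> \<le> (2^d * exp (t + 144 * t^2))^k"
  proof (intro power_mono mult_left_mono)
    show "1 + t + 144 * t^2 \<le> exp (t + 144 * t^2)"
      using exp_ge_add_one_self[of "t + 144 * t^2"] by (simp add: add.assoc)
    show "0 \<le> 2^d * (1 + t + 144 * t^2)" using t0 by simp
  qed auto
  also have "\<dots> = real (card (mats k d)) * exp (k * (t + 144 * t^2))"
    by (simp add: card_mats power_mult_distrib exp_of_nat_mult[symmetric] power_mult)
  finally have "real (card {A\<in>mats k d. (1+\<delta>) * k \<le> qf k d A u}) \<le> real (card (mats k d)) * exp (k * (t + 144 * t^2)) / a"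
    using a0 by (simp add: field_simps)
  also have "\<dots> = real (card (mats k d)) * exp (k * (t + 144 * t^2) - t * ((1+\<delta>) * k))"
    by (simp add: a_def exp_diff)
  also have "k * (t + 144 * t^2) - t * ((1+\<delta>) * k) = - (k * \<delta>^2 / 576)"
    by (simp add: t_def power2_eq_square field_simps)
  finally show ?thesis .
qed

lemma tail_lower:
  assumes u1: "(\<Sum>i<d. (u i)^2) = 1" and d0: "0 < \<delta>" and d1: "\<delta> \<le> 1/4"
  shows "real (card {A\<in>mats k d. qf k d A u \<le> (1-\<delta>) * k}) \<le> real (card (mats k d)) * exp (- (k * \<delta>^2 / 576))"
proof -
  define t where "t = \<delta> / 288"
  have t0: "0 \<le> t" and t1: "t \<le> 1/12" using d0 d1 by (auto simp: t_def)
  define a where "a = exp (- (t * ((1-\<delta>) * k)))"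
  have a0: "0 < a" by (simp add: a_def)
  have sub: "{A\<in>mats k d. qf k d A u \<le> (1-\<delta>) * k} \<subseteq> {A\<in>mats k d. a \<le> exp (- (t * qf k d A u))}"
    unfolding a_def using t0 by (auto intro: mult_left_mono)
  have "real (card {A\<in>mats k d. qf k d A u \<le> (1-\<delta>) * k}) * a \<le> real (card {A\<in>mats k d. a \<le> exp (- (t * qf k d A u))}) * a"
    using card_mono[OF _ sub] finite_mats a0 by (intro mult_right_mono) auto
  also have "\<dots> \<le> (\<Sum>A\<in>mats k d. exp ((-t) * qf k d A u))"
    using markov_count[OF finite_mats _ a0, where f="\<lambda>A. exp ((-t) * qf k d A u)"] by simp
  also have "\<dots> = (\<Sum>r\<in>signs d. exp ((-t) * (rz d r u)^2))^k" by (rule sum_mats_exp)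
  also have "\<dots> \<le> (2^d * (1 - t + 72 * t^2))^k"
    using mgf_sq_lower[OF u1 t0] by (intro power_mono) (auto intro: sum_nonneg)
  also have "\<dots> \<le> (2^d * exp (- t + 72 * t^2))^k"
  proof (intro power_mono mult_left_mono)
    have "1 + (- t + 72 * t^2) \<le> exp (- t + 72 * t^2)" by (rule exp_ge_add_one_self)
    then show "1 - t + 72 * t^2 \<le> exp (- t + 72 * t^2)" by linarith
    have "0 \<le> 1 - t" using t1 by simp
    then show "0 \<le> 2^d * (1 - t + 72 * t^2)" by (intro mult_nonneg_nonneg) auto
  qed auto
  also have "\<dots> = real (card (mats k d)) * exp (k * (- t + 72 * t^2))"
    by (simp add: card_mats power_mult_distrib exp_of_nat_mult[symmetric] power_mult)
  finally have "real (card {A\<in>mats k d. qf k d A u \<le> (1-\<delta>) * k}) \<le> real (card (mats k d)) * exp (k * (- t + 72 * t^2)) / a"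
    using a0 by (simp add: field_simps)
  also have "\<dots> = real (card (mats k d)) * (exp (k * (- t + 72 * t^2)) * exp (t * ((1-\<delta>) * k)))"
    by (simp add: a_def exp_minus divide_inverse)
  also have "\<dots> = real (card (mats k d)) * exp (k * (- t + 72 * t^2) + t * ((1-\<delta>) * k))"
    by (simp only: exp_add)
  also have "\<dots> \<le> real (card (mats k d)) * exp (- (k * \<delta>^2 / 576))"
  proof -
    have "k * (- t + 72 * t^2) + t * ((1-\<delta>) * k) = - (3 * (k * \<delta>^2 / 1152))"
      by (simp add: t_def power2_eq_square field_simps)
    also have "\<dots> \<le> - (k * \<delta>^2 / 576)" by simp
    finally show ?thesis by (intro mult_left_mono) auto
  qed
  finally show ?thesis .
qed

lemma JL_exists:
  assumes fin: "finite U" and U1: "\<And>u. u \<in> U \<Longrightarrow> (\<Sum>i<d. (u i)^2) = 1"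
    and d0: "0 < \<delta>" and d1: "\<delta> \<le> 1/4"
    and small: "real (card U) * 2 * exp (- (k * \<delta>^2 / 576)) < 1"
  shows "\<exists>A\<in>mats k d. \<forall>u\<in>U. (1-\<delta>) * k < qf k d A u \<and> qf k d A u < (1+\<delta>) * k"
proof -
  define e where "e = exp (- (k * \<delta>^2 / 576))"
  define B where "B = (\<lambda>u. {A\<in>mats k d. (1+\<delta>) * k \<le> qf k d A u} \<union> {A\<in>mats k d. qf k d A u \<le> (1-\<delta>) * k})"
  have cB: "real (card (B u)) \<le> 2 * real (card (mats k d)) * e" if "u \<in> U" for u
  proof -
    have "card (B u) \<le> card {A\<in>mats k d. (1+\<delta>) * k \<le> qf k d A u} + card {A\<in>mats k d. qf k d A u \<le> (1-\<delta>) * k}"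
      unfolding B_def by (rule card_Un_le)
    then have "real (card (B u)) \<le> real (card {A\<in>mats k d. (1+\<delta>) * k \<le> qf k d A u}) + real (card {A\<in>mats k d. qf k d A u \<le> (1-\<delta>) * k})"
      by linarith
    also have "\<dots> \<le> real (card (mats k d)) * e + real (card (mats k d)) * e"
      unfolding e_def by (intro add_mono tail_upper tail_lower U1 that d0 d1)
    finally show ?thesis by (simp add: algebra_simps)
  qed
  have "real (card (\<Union>u\<in>U. B u)) \<le> real (\<Sum>u\<in>U. card (B u))"
    using card_UN_le[OF fin, of B] by linarith
  also have "\<dots> = (\<Sum>u\<in>U. real (card (B u)))" by simp
  also have "\<dots> \<le> (\<Sum>u\<in>U. 2 * real (card (mats k d)) * e)" by (rule sum_mono) (rule cB)
  also have "\<dots> = real (card U) * 2 * e * real (card (mats k d))" by simp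
  also have "\<dots> < real (card (mats k d))"
  proof -
    have "0 < real (card (mats k d))" by (simp add: card_mats)
    then show ?thesis using small unfolding e_def by simp
  qed
  finally have "card (\<Union>u\<in>U. B u) < card (mats k d)" by linarith
  then have "\<not> mats k d \<subseteq> (\<Union>u\<in>U. B u)"
  proof (intro notI)
    assume "mats k d \<subseteq> (\<Union>u\<in>U. B u)"
    moreover have "finite (\<Union>u\<in>U. B u)" using fin by (auto simp: B_def finite_mats)
    ultimately have "card (mats k d) \<le> card (\<Union>u\<in>U. B u)" by (rule card_mono[rotated])
    then show False using \<open>card (\<Union>u\<in>U. B u) < card (mats k d)\<close> by simp
  qed
  then obtain A where A: "A \<in> mats k d" "A \<notin> (\<Union>u\<in>U. B u)" by blast
  show ?thesis
    by (rule bexI[OF _ A(1)]) (use A(2) A(1) in \<open>auto simp: B_def not_le\<close>)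
qed



lemma vnorm_L2: "vnorm m x = L2_set x {..<m}"
  unfolding vnorm_def L2_set_def by simp

lemma lattice_dist:
  assumes x: "x \<in> scaled_lattice s d" and y: "y \<in> scaled_lattice s d" and s: "0 \<le> s" and ne: "x \<noteq> y"
  shows "s \<le> vnorm d (x - y)"
proof -
  obtain i where i: "x i \<noteq> y i" using ne by blast
  have xv: "x \<in> vec_space d" and yv: "y \<in> vec_space d" using x y by (auto simp: scaled_lattice_def)
  have id: "i < d"
  proof (rule ccontr)
    assume "\<not> i < d"
    then have "x i = 0" "y i = 0" using xv yv by (auto simp: vec_space_def)
    then show False using i by simp
  qed
  obtain z1 :: int where z1: "x i = s * of_int z1" using x id by (auto simp: scaled_lattice_def)
  obtain z2 :: int where z2: "y i = s * of_int z2" using y id by (auto simp: scaled_lattice_def)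
  have "z1 \<noteq> z2" using i z1 z2 by auto
  then have "1 \<le> \<bar>of_int z1 - of_int z2 :: real\<bar>" by (simp flip: of_int_diff)
  then have "s * 1 \<le> s * \<bar>of_int z1 - of_int z2 :: real\<bar>" using s by (rule mult_left_mono)
  also have "\<dots> = \<bar>x i - y i\<bar>" using s by (simp add: z1 z2 abs_mult flip: right_diff_distrib)
  also have "\<dots> = sqrt ((x i - y i)^2)" by simp
  also have "\<dots> \<le> vnorm d (x - y)"
    unfolding vnorm_def
  proof (rule real_sqrt_le_mono)
    have "(\<lambda>i. ((x - y) i)^2) i \<le> (\<Sum>i<d. ((x - y) i)^2)"
      by (rule member_le_sum) (use id in auto)
    then show "(x i - y i)^2 \<le> (\<Sum>i<d. ((x - y) i)^2)" by simp
  qed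
  finally show ?thesis by simp
qed

lemma rz_diff_scale:
  assumes "n \<noteq> 0"
  shows "rz d r x - rz d r y = n * rz d r (\<lambda>i. (x i - y i) / n)"
proof -
  have "rz d r (\<lambda>i. (x i - y i) / n) = (rz d r x - rz d r y) / n"
    unfolding rz_def by (simp add: sum_divide_distrib sum_subtractf[symmetric] algebra_simps)
  then show ?thesis using assms by simp
qed

lemma embed_bound:
  fixes A :: "nat \<Rightarrow> nat \<Rightarrow> real" and l0 :: real
  assumes k: "0 < k" and d0: "0 < \<delta>" and d1: "\<delta> \<le> 1/4" and l0: "1 \<le> l0"
    and n: "n = vnorm d (x - y)" and npos: "0 < n"
    and q: "(1-\<delta>) * k < qf k d A (\<lambda>i. (x i - y i) / n)" "qf k d A (\<lambda>i. (x i - y i) / n) < (1+\<delta>) * k"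
    and sk: "sqrt k / l0 \<le> \<delta> * n"
    and F: "F = (\<lambda>x j. if j < k then of_int (round (l0 * (rz d (A j) x / sqrt k))) / l0 else 0)"
  shows "(1 - 2*\<delta>) * n \<le> vnorm k (F x - F y) \<and> vnorm k (F x - F y) \<le> (1 + 2*\<delta>) * n"
proof -
  define u where "u = (\<lambda>i. (x i - y i) / n)"
  define g where "g = (\<lambda>j. (rz d (A j) x - rz d (A j) y) / sqrt k)"
  define e where "e = (\<lambda>j. (F x - F y) j - g j)"
  have ksq: "0 < sqrt (real k)" using k by simp
  have R: "\<bar>of_int (round (l0 * z)) / l0 - z\<bar> \<le> 1 / (2 * l0)" for z
  proof -
    have "\<bar>of_int (round (l0 * z)) - l0 * z\<bar> \<le> 1/2" by (rule of_int_round_abs_le)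
    moreover have "of_int (round (l0 * z)) / l0 - z = (of_int (round (l0 * z)) - l0 * z) / l0"
      using l0 by (simp add: field_simps)
    ultimately show ?thesis using l0 by (simp add: abs_divide field_simps)
  qed
  have eb: "\<bar>e j\<bar> \<le> 1 / l0" if "j < k" for j
  proof -
    have "e j = (of_int (round (l0 * (rz d (A j) x / sqrt k))) / l0 - rz d (A j) x / sqrt k)
              - (of_int (round (l0 * (rz d (A j) y / sqrt k))) / l0 - rz d (A j) y / sqrt k)"
      using that by (simp add: e_def g_def F diff_divide_distrib)
    also have "\<bar>\<dots>\<bar> \<le> 1 / (2 * l0) + 1 / (2 * l0)"
      using R[of "rz d (A j) x / sqrt k"] R[of "rz d (A j) y / sqrt k"] by linarith
    finally show ?thesis by simp
  qed
  have Le: "L2_set e {..<k} \<le> sqrt k / l0"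
  proof -
    have "L2_set e {..<k} \<le> L2_set (\<lambda>_. 1 / l0) {..<k}"
      unfolding L2_set_def
      by (intro real_sqrt_le_mono sum_mono) (use eb l0 abs_le_square_iff in \<open>fastforce\<close>)
    also have "\<dots> = sqrt k / l0" using l0 by (simp add: L2_set_constant)
    finally show ?thesis .
  qed
  have gsq: "(\<Sum>j<k. (g j)^2) = n^2 * qf k d A u / k"
  proof -
    have "(\<Sum>j<k. (g j)^2) = (\<Sum>j<k. n^2 * (rz d (A j) u)^2 / k)"
      using npos ksq by (intro sum.cong refl)
        (simp add: g_def u_def rz_diff_scale[of n d _ x y] power_divide power_mult_distrib)
    also have "\<dots> = n^2 * qf k d A u / k"
      by (simp add: qf_def sum_distrib_left sum_divide_distrib)
    finally show ?thesis .
  qed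
  have Lg_up: "L2_set g {..<k} \<le> (1 + \<delta>) * n"
  proof -
    have "n^2 * qf k d A u / k \<le> n^2 * ((1+\<delta>) * k) / k"
      using q(2) k unfolding u_def by (intro divide_right_mono mult_left_mono) auto
    also have "\<dots> = (1 + \<delta>) * n^2" using k by simp
    also have "\<dots> \<le> ((1 + \<delta>) * n)^2"
      using d0 by (simp add: power2_eq_square algebra_simps)
    finally have "L2_set g {..<k} \<le> sqrt (((1 + \<delta>) * n)^2)"
      unfolding L2_set_def gsq by (rule real_sqrt_le_mono)
    then show ?thesis using d0 npos by simp
  qed
  have Lg_low: "(1 - \<delta>) * n \<le> L2_set g {..<k}"
  proof -
    have "((1 - \<delta>) * n)^2 \<le> (1 - \<delta>) * n^2"
      using d0 d1 npos by (simp add: power2_eq_square algebra_simps mult_right_mono)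
    also have "\<dots> = n^2 * ((1-\<delta>) * k) / k" using k by simp
    also have "\<dots> \<le> n^2 * qf k d A u / k"
      using q(1) k unfolding u_def by (intro divide_right_mono mult_left_mono) auto
    finally have "sqrt (((1 - \<delta>) * n)^2) \<le> L2_set g {..<k}"
      unfolding L2_set_def gsq by (rule real_sqrt_le_mono)
    then show ?thesis using d1 npos by simp
  qed
  have split: "vnorm k (F x - F y) = L2_set (\<lambda>j. g j + e j) {..<k}"
    unfolding vnorm_L2 e_def by (simp add: fun_diff_def)
  have up: "vnorm k (F x - F y) \<le> L2_set g {..<k} + L2_set e {..<k}"
    unfolding split by (rule L2_set_triangle_ineq)
  have "L2_set g {..<k} = L2_set (\<lambda>j. (g j + e j) + (- e j)) {..<k}" by simp
  also have "\<dots> \<le> L2_set (\<lambda>j. g j + e j) {..<k} + L2_set (\<lambda>j. - e j) {..<k}"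
    by (rule L2_set_triangle_ineq)
  also have "L2_set (\<lambda>j. - e j) {..<k} = L2_set e {..<k}" by (simp add: L2_set_def)
  finally have low: "L2_set g {..<k} \<le> vnorm k (F x - F y) + L2_set e {..<k}"
    unfolding split .
  show ?thesis using up low Lg_up Lg_low Le sk by (auto simp: algebra_simps)
qed



lemma vnorm_0: "vnorm m (x - x) = 0" by (simp add: vnorm_def)

lemma unit_sq:
  assumes "0 < vnorm d (x - y)"
  shows "(\<Sum>i<d. ((\<lambda>i. (x i - y i) / vnorm d (x - y)) i)^2) = 1"
proof -
  let ?n = "vnorm d (x - y)"
  have h: "?n^2 = (\<Sum>i<d. (x i - y i)^2)"
    unfolding vnorm_def by (simp add: sum_nonneg)
  have "0 < ?n^2" using assms by simp
  then have "(\<Sum>i<d. (x i - y i)^2) \<noteq> 0" using h by simp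
  moreover have "(\<Sum>i<d. ((\<lambda>i. (x i - y i) / ?n) i)^2) = (\<Sum>i<d. (x i - y i)^2) / ?n^2"
    by (simp add: power_divide sum_divide_distrib)
  ultimately show ?thesis using assms h by simp
qed

theorem mainTheorem1:
  "\<forall>\<epsilon>::real. \<epsilon> > 0 \<longrightarrow>
    (\<exists>c::real. c > 0 \<and>
      (\<forall>(lam0::nat) (N0::nat). lam0 \<ge> 1 \<longrightarrow> \<epsilon> < 1 / (real lam0 + 1) \<longrightarrow>
        (\<forall>k::nat. k > 0 \<longrightarrow>
          (\<exists>lam1::nat. \<forall>(d::nat) (lam::nat) (D::(nat \<Rightarrow> real) set).
             real k \<ge> c * ln (real d) \<longrightarrow> lam \<ge> lam1 \<longrightarrow>
             D \<subseteq> scaled_lattice (real lam / real lam0) d \<inter> cball0 d (real lam * real N0) \<longrightarrow>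
             finite D \<longrightarrow> card D = d \<longrightarrow>
             (\<exists>F::(nat \<Rightarrow> real) \<Rightarrow> (nat \<Rightarrow> real).
                F ` D \<subseteq> scaled_lattice (1 / real lam0) k \<and>
                (\<forall>x\<in>D. \<forall>y\<in>D.
                   (1 - \<epsilon> - \<epsilon> / (real lam * real lam0)) * vnorm d (x - y)
                     \<le> vnorm k (F x - F y) \<and>
                   vnorm k (F x - F y)
                     \<le> (1 + \<epsilon> + \<epsilon> / (real lam * real lam0)) * vnorm d (x - y)))))))"
proof (intro allI impI)
  fix \<epsilon> :: real assume eps: "\<epsilon> > 0"
  define c where "c = 9216 / \<epsilon>^2"
  have c0: "c > 0" using eps by (simp add: c_def)
  have main: "\<forall>(lam0::nat) (N0::nat). lam0 \<ge> 1 \<longrightarrow> \<epsilon> < 1 / (real lam0 + 1) \<longrightarrow>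
        (\<forall>k::nat. k > 0 \<longrightarrow>
          (\<exists>lam1::nat. \<forall>(d::nat) (lam::nat) (D::(nat \<Rightarrow> real) set).
             real k \<ge> c * ln (real d) \<longrightarrow> lam \<ge> lam1 \<longrightarrow>
             D \<subseteq> scaled_lattice (real lam / real lam0) d \<inter> cball0 d (real lam * real N0) \<longrightarrow>
             finite D \<longrightarrow> card D = d \<longrightarrow>
             (\<exists>F::(nat \<Rightarrow> real) \<Rightarrow> (nat \<Rightarrow> real).
                F ` D \<subseteq> scaled_lattice (1 / real lam0) k \<and>
                (\<forall>x\<in>D. \<forall>y\<in>D.
                   (1 - \<epsilon> - \<epsilon> / (real lam * real lam0)) * vnorm d (x - y)
                     \<le> vnorm k (F x - F y) \<and>
                   vnorm k (F x - F y)
                     \<le> (1 + \<epsilon> + \<epsilon> / (real lam * real lam0)) * vnorm d (x - y)))))"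
  proof (intro allI impI)
    fix lam0 N0 k :: nat
    assume l0: "lam0 \<ge> 1" and el: "\<epsilon> < 1 / (real lam0 + 1)" and k: "k > 0"
    have eh: "\<epsilon> < 1/2"
    proof -
      have "1 / (real lam0 + 1) \<le> 1/2" using l0 by (simp add: field_simps)
      then show ?thesis using el by linarith
    qed
    define \<delta> where "\<delta> = \<epsilon> / 2"
    have d0: "0 < \<delta>" and d1: "\<delta> \<le> 1/4" using eps eh by (auto simp: \<delta>_def)
    define lam1 :: nat where "lam1 = nat \<lceil>sqrt k / \<delta>\<rceil> + 1"
    show "\<exists>lam1::nat. \<forall>(d::nat) (lam::nat) (D::(nat \<Rightarrow> real) set).
             real k \<ge> c * ln (real d) \<longrightarrow> lam \<ge> lam1 \<longrightarrow>
             D \<subseteq> scaled_lattice (real lam / real lam0) d \<inter> cball0 d (real lam * real N0) \<longrightarrow>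
             finite D \<longrightarrow> card D = d \<longrightarrow>
             (\<exists>F::(nat \<Rightarrow> real) \<Rightarrow> (nat \<Rightarrow> real).
                F ` D \<subseteq> scaled_lattice (1 / real lam0) k \<and>
                (\<forall>x\<in>D. \<forall>y\<in>D.
                   (1 - \<epsilon> - \<epsilon> / (real lam * real lam0)) * vnorm d (x - y)
                     \<le> vnorm k (F x - F y) \<and>
                   vnorm k (F x - F y)
                     \<le> (1 + \<epsilon> + \<epsilon> / (real lam * real lam0)) * vnorm d (x - y)))"
    proof (rule exI[of _ lam1], intro allI impI)
      fix d lam :: nat and D :: "(nat \<Rightarrow> real) set"
      assume kd: "c * ln (real d) \<le> real k" and lam: "lam1 \<le> lam"
        and DS: "D \<subseteq> scaled_lattice (real lam / real lam0) d \<inter> cball0 d (real lam * real N0)"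
        and fin: "finite D" and cD: "card D = d"
      have lam_pos: "1 \<le> lam" using lam by (simp add: lam1_def)
      have lam_big: "sqrt k / \<delta> \<le> real lam"
      proof -
        have "sqrt k / \<delta> \<le> real (nat \<lceil>sqrt k / \<delta>\<rceil>)" by (rule real_nat_ceiling_ge)
        also have "\<dots> \<le> real lam"
        proof -
          have "nat \<lceil>sqrt k / \<delta>\<rceil> \<le> lam" using lam unfolding lam1_def by linarith
          then show ?thesis by (simp only: of_nat_le_iff)
        qed
        finally show ?thesis .
      qed
      have slack: "0 \<le> \<epsilon> / (real lam * real lam0)" using eps by simp
      define s where "s = real lam / real lam0"
      have s0: "0 < s" using lam_pos l0 by (simp add: s_def)
      have Dl: "x \<in> scaled_lattice s d" if "x \<in> D" for x using DS that by (auto simp: s_def)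
      have ndist: "s \<le> vnorm d (x - y)" if "x \<in> D" "y \<in> D" "x \<noteq> y" for x y
        by (rule lattice_dist[OF Dl[OF that(1)] Dl[OF that(2)]]) (use s0 that in auto)
      show "\<exists>F::(nat \<Rightarrow> real) \<Rightarrow> (nat \<Rightarrow> real).
                F ` D \<subseteq> scaled_lattice (1 / real lam0) k \<and>
                (\<forall>x\<in>D. \<forall>y\<in>D.
                   (1 - \<epsilon> - \<epsilon> / (real lam * real lam0)) * vnorm d (x - y)
                     \<le> vnorm k (F x - F y) \<and>
                   vnorm k (F x - F y)
                     \<le> (1 + \<epsilon> + \<epsilon> / (real lam * real lam0)) * vnorm d (x - y))"
      proof (cases "d \<le> 1")
        case True
        have eq: "x = y" if "x \<in> D" "y \<in> D" for x y
          using card_le_Suc0_iff_eq[OF fin] True cD that by auto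
        show ?thesis
        proof (rule exI[of _ "\<lambda>_ _. 0"], intro conjI ballI)
          show "(\<lambda>_ _. 0) ` D \<subseteq> scaled_lattice (1 / real lam0) k"
            by (auto simp: scaled_lattice_def vec_space_def intro: exI[of _ 0])
        next
          fix x y assume "x \<in> D" "y \<in> D"
          then have "x = y" by (rule eq)
          then show "(1 - \<epsilon> - \<epsilon> / (real lam * real lam0)) * vnorm d (x - y) \<le> vnorm k ((\<lambda>_. 0) - (\<lambda>_. 0))"
            and "vnorm k ((\<lambda>_. 0) - (\<lambda>_. 0)) \<le> (1 + \<epsilon> + \<epsilon> / (real lam * real lam0)) * vnorm d (x - y)"
            by (simp_all add: vnorm_0)
        qed
      next
        case False
        then have d2: "2 \<le> d" by simp
        define P where "P = {p \<in> D \<times> D. fst p \<noteq> snd p}"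
        define uf where "uf = (\<lambda>p::(nat \<Rightarrow> real) \<times> (nat \<Rightarrow> real). (\<lambda>i. (fst p i - snd p i) / vnorm d (fst p - snd p)))"
        define U where "U = uf ` P"
        have finP: "finite P" using fin by (auto simp: P_def)
        have finU: "finite U" using finP by (simp add: U_def)
        have cU: "card U \<le> d * d"
        proof -
          have "card U \<le> card P" unfolding U_def by (rule card_image_le[OF finP])
          also have "card P \<le> card (D \<times> D)" using fin by (intro card_mono) (auto simp: P_def)
          also have "card (D \<times> D) = d * d" using cD by (simp add: card_cartesian_product)
          finally show ?thesis .
        qed
        have npos: "0 < vnorm d (x - y)" if "x \<in> D" "y \<in> D" "x \<noteq> y" for x y
          using ndist[OF that] s0 by linarith
        have U1: "(\<Sum>i<d. (u i)^2) = 1" if "u \<in> U" for u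
        proof -
          obtain p where p: "p \<in> P" "u = uf p" using \<open>u \<in> U\<close> by (auto simp: U_def)
          have "0 < vnorm d (fst p - snd p)" using p(1) npos by (auto simp: P_def)
          from unit_sq[OF this] show ?thesis using p(2) by (simp add: uf_def)
        qed
        have small: "real (card U) * 2 * exp (- (k * \<delta>^2 / 576)) < 1"
        proof -
          have dpos: "0 < real d" using d2 by simp
          have "4 * ln (real d) \<le> k * \<delta>^2 / 576"
          proof -
            have "c * ln (real d) * (\<epsilon>^2 / 2304) \<le> real k * (\<epsilon>^2 / 2304)"
              using kd by (intro mult_right_mono) auto
            moreover have "c * ln (real d) * (\<epsilon>^2 / 2304) = 4 * ln (real d)"
              using eps by (simp add: c_def field_simps)
            moreover have "real k * (\<epsilon>^2 / 2304) = k * \<delta>^2 / 576"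
              by (simp add: \<delta>_def power_divide field_simps)
            ultimately show ?thesis by linarith
          qed
          then have "exp (- (k * \<delta>^2 / 576)) \<le> exp (- (4 * ln (real d)))" by simp
          also have "exp (- (4 * ln (real d))) = 1 / real d ^ 4"
          proof -
            have "exp (4 * ln (real d)) = exp (ln (real d)) ^ 4"
              using exp_of_nat_mult[of 4 "ln (real d)"] by simp
            also have "\<dots> = real d ^ 4" using dpos by simp
            finally show ?thesis by (simp add: exp_minus inverse_eq_divide)
          qed
          finally have e: "exp (- (k * \<delta>^2 / 576)) \<le> 1 / real d ^ 4" .
          have "real (card U) * 2 * exp (- (k * \<delta>^2 / 576)) \<le> real (d * d) * 2 * (1 / real d ^ 4)"
          proof (rule mult_mono)
            have "real (card U) \<le> real (d * d)" using cU by (simp only: of_nat_le_iff)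
            then show "real (card U) * 2 \<le> real (d * d) * 2" by linarith
          qed (use e in auto)
          also have "\<dots> = 2 / (real d)^2" using dpos by (simp add: field_simps power2_eq_square power4_eq_xxxx)
          also have "\<dots> < 1"
          proof -
            have "4 \<le> (real d)^2" using d2 power_mono[of 2 "real d" 2] by simp
            then show ?thesis by (simp add: divide_less_eq)
          qed
          finally show ?thesis .
        qed
        obtain A where A: "A \<in> mats k d"
          and Ag: "\<And>u. u \<in> U \<Longrightarrow> (1-\<delta>) * k < qf k d A u \<and> qf k d A u < (1+\<delta>) * k"
          using JL_exists[OF finU U1 d0 d1 small] by blast
        define F where "F = (\<lambda>x j. if j < k then of_int (round (real lam0 * (rz d (A j) x / sqrt k))) / real lam0 else 0)"
        show ?thesis
        proof (rule exI[of _ F], intro conjI ballI)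
          show "F ` D \<subseteq> scaled_lattice (1 / real lam0) k"
          proof
            fix v assume "v \<in> F ` D"
            then obtain x where v: "v = F x" by blast
            show "v \<in> scaled_lattice (1 / real lam0) k"
              unfolding v scaled_lattice_def vec_space_def F_def by auto
          qed
        next
          fix x y assume x: "x \<in> D" and y: "y \<in> D"
          have "(1 - \<epsilon> - \<epsilon> / (real lam * real lam0)) * vnorm d (x - y) \<le> vnorm k (F x - F y) \<and>
                vnorm k (F x - F y) \<le> (1 + \<epsilon> + \<epsilon> / (real lam * real lam0)) * vnorm d (x - y)"
          proof (cases "x = y")
            case True then show ?thesis by (simp add: vnorm_0)
          next
            case False
            define n where "n = vnorm d (x - y)"
            have n0: "0 < n" using npos[OF x y False] by (simp add: n_def)
            have uU: "(\<lambda>i. (x i - y i) / n) \<in> U"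
              unfolding U_def uf_def n_def using x y False by (auto simp: P_def image_iff intro!: bexI[of _ "(x, y)"])
            have sk: "sqrt k / real lam0 \<le> \<delta> * n"
            proof -
              have "sqrt k \<le> \<delta> * real lam" using lam_big d0 by (simp add: field_simps)
              then have "sqrt k / real lam0 \<le> \<delta> * real lam / real lam0"
                by (intro divide_right_mono) auto
              also have "\<dots> = \<delta> * s" by (simp add: s_def)
              also have "\<dots> \<le> \<delta> * n" using ndist[OF x y False] d0 by (simp add: n_def)
              finally show ?thesis .
            qed
            have b: "(1 - 2*\<delta>) * n \<le> vnorm k (F x - F y) \<and> vnorm k (F x - F y) \<le> (1 + 2*\<delta>) * n"
              by (rule embed_bound[OF k d0 d1 _ n_def n0 conjunct1[OF Ag[OF uU]] conjunct2[OF Ag[OF uU]] sk F_def])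
                (use l0 in simp)
            have "(1 - \<epsilon> - \<epsilon> / (real lam * real lam0)) * n \<le> (1 - 2*\<delta>) * n"
              using slack n0 by (intro mult_right_mono) (auto simp: \<delta>_def)
            moreover have "(1 + 2*\<delta>) * n \<le> (1 + \<epsilon> + \<epsilon> / (real lam * real lam0)) * n"
              using slack n0 by (intro mult_right_mono) (auto simp: \<delta>_def)
            ultimately show ?thesis using b by (simp add: n_def)
          qed
          then show "(1 - \<epsilon> - \<epsilon> / (real lam * real lam0)) * vnorm d (x - y) \<le> vnorm k (F x - F y)"
            and "vnorm k (F x - F y) \<le> (1 + \<epsilon> + \<epsilon> / (real lam * real lam0)) * vnorm d (x - y)"
            by auto
        qed
      qed
    qed
  qed
  show "\<exists>c::real. c > 0 \<and> (\<forall>(lam0::nat) (N0::nat). lam0 \<ge> 1 \<longrightarrow> \<epsilon> < 1 / (real lam0 + 1) \<longrightarrow>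
        (\<forall>k::nat. k > 0 \<longrightarrow>
          (\<exists>lam1::nat. \<forall>(d::nat) (lam::nat) (D::(nat \<Rightarrow> real) set).
             real k \<ge> c * ln (real d) \<longrightarrow> lam \<ge> lam1 \<longrightarrow>
             D \<subseteq> scaled_lattice (real lam / real lam0) d \<inter> cball0 d (real lam * real N0) \<longrightarrow>
             finite D \<longrightarrow> card D = d \<longrightarrow>
             (\<exists>F::(nat \<Rightarrow> real) \<Rightarrow> (nat \<Rightarrow> real).
                F ` D \<subseteq> scaled_lattice (1 / real lam0) k \<and>
                (\<forall>x\<in>D. \<forall>y\<in>D.
                   (1 - \<epsilon> - \<epsilon> / (real lam * real lam0)) * vnorm d (x - y)
                     \<le> vnorm k (F x - F y) \<and>
                   vnorm k (F x - F y)
                     \<le> (1 + \<epsilon> + \<epsilon> / (real lam * real lam0)) * vnorm d (x - y))))))"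
    using c0 main by blast
qed

end
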